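(* Fix $j\in\mathbb{Z}$ and let $k_n=\lfloor\log_2 n+\log_2\log_2 n\rfloor+j$. Then, under the conditional distribution given $X_n^*=2^{k_n}$, \[ \frac{S_n}{X_n^*}-2^{-j}\,2^{\{\log_2 n+\log_2\log_2 n\}}\xrightarrow{\ \mathbb{P}\ }1 . \]
   Context: $X_1,X_2,\ldots$ are iid with $\mathbb{P}\{X_i=2^k\}=2^{-k}$, $k\in\{1,2,\ldots\}$; $S_n=\sum_{i\le n}X_i$, $X_n^*=\max_{i\le n}X_i$; $\{y\}$ denotes the fractional part of $y$. Convergence in conditional probability means that for every $\varepsilon>0$ the conditional probability (given $X_n^*=2^{k_n}$) that the left side differs from $1$ by more than $\varepsilon$ tends to $0$. *)

theory Defs
  imports "HOL-Probability.Probability"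
begin

definition Ssum :: "(nat \<Rightarrow> 'a \<Rightarrow> real) \<Rightarrow> nat \<Rightarrow> 'a \<Rightarrow> real" where
  "Ssum X n \<omega> = (\<Sum>i=1..n. X i \<omega>)"

definition Xmax :: "(nat \<Rightarrow> 'a \<Rightarrow> real) \<Rightarrow> nat \<Rightarrow> 'a \<Rightarrow> real" where
  "Xmax X n \<omega> = Max ((\<lambda>i. X i \<omega>) ` {1..n})"

definition kseq :: "int \<Rightarrow> nat \<Rightarrow> int" where
  "kseq j n = \<lfloor>log 2 (real n) + log 2 (log 2 (real n))\<rfloor> + j"

end

theory Submission
  imports Defs "HOL-Real_Asymp.Real_Asymp"
begin



definition gk :: "nat \<Rightarrow> real \<Rightarrow> real" where
  "gk k x = (\<Sum>t\<in>{1..<k}. if x = 2^t then 2^t else 0)"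

lemma gk_meas[measurable]: "gk k \<in> borel_measurable borel"
  unfolding gk_def by measurable

lemma sum_pow_delta:
  assumes "finite T" "s \<in> T"
  shows "(\<Sum>t\<in>T. if (2::real)^s = 2^t then f t else 0) = (f s :: real)"
proof -
  have "(\<Sum>t\<in>T. if (2::real)^s = 2^t then f t else 0) = (\<Sum>t\<in>T. if s = t then f t else 0)"
    by (intro sum.cong) auto
  also have "\<dots> = f s" using assms by simp
  finally show ?thesis .
qed

lemma sum_pow_zero:
  assumes "\<forall>t\<in>T. x \<noteq> (2::real)^t"
  shows "(\<Sum>t\<in>T. if x = 2^t then f t else 0) = (0::real)"
  using assms by (intro sum.neutral) auto

lemma gk_pow: "1 \<le> s \<Longrightarrow> s < k \<Longrightarrow> gk k (2^s) = 2^s"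
  unfolding gk_def by (rule sum_pow_delta) auto

lemma gk_sq: "(gk k x)^2 = (\<Sum>t\<in>{1..<k}. if x = 2^t then 4^t else 0)"
proof (cases "\<exists>s\<in>{1..<k}. x = 2^s")
  case True
  then obtain s where s: "s \<in> {1..<k}" "x = 2^s" by auto
  show ?thesis unfolding gk_def s(2) using s(1)
    by (simp add: sum_pow_delta power_mult_distrib[symmetric] power2_eq_square power_mult[symmetric] mult.commute)
next
  case False
  then show ?thesis unfolding gk_def by (simp add: sum_pow_zero)
qed

lemma gk_bound: "\<bar>gk k x\<bar> \<le> 2^k"
proof -
  have "\<bar>gk k x\<bar> \<le> (\<Sum>t\<in>{1..<k}. \<bar>if x = 2^t then 2^t else 0\<bar>)"
    unfolding gk_def by (rule sum_abs)
  also have "\<dots> \<le> (\<Sum>t\<in>{1..<k}. (2::real)^t)" by (intro sum_mono) auto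
  also have "\<dots> \<le> (\<Sum>t<k. (2::real)^t)" by (intro sum_mono2) auto
  also have "\<dots> = 2^k - 1" by (induction k) auto
  finally show ?thesis by simp
qed

lemma sum_half: "(\<Sum>t\<in>{1..<Suc k}. 1/(2::real)^t) = 1 - 1/2^k"
  by (induction k) (auto simp: field_simps)

lemma sum_two: "(\<Sum>t\<in>{1..<Suc k}. (2::real)^t) = 2^Suc k - 2"
  by (induction k) (auto simp: field_simps)




locale stp = prob_space M for M :: "'a measure" +
  fixes X :: "nat \<Rightarrow> 'a \<Rightarrow> real"
  assumes ind: "indep_vars (\<lambda>_. borel) X {1..}"
  and dist: "\<And>i k. i \<ge> 1 \<Longrightarrow> k \<ge> 1 \<Longrightarrow> measure M {\<omega> \<in> space M. X i \<omega> = 2 ^ k} = 1 / 2 ^ k"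
begin

lemma rv[measurable]: "1 \<le> i \<Longrightarrow> X i \<in> borel_measurable M"
  using ind by (auto simp: indep_vars_def)

lemma indep_gen:
  assumes J: "finite J" "J \<subseteq> {1..}" "i \<notin> J" "1 \<le> i"
    and f: "(f::real\<Rightarrow>real) \<in> borel_measurable borel" and h: "(h::real\<Rightarrow>real) \<in> borel_measurable borel"
  shows "indep_var borel (\<lambda>\<omega>. f (X i \<omega>)) borel (\<lambda>\<omega>. \<Sum>l\<in>J. h (X l \<omega>))"
proof -
  define F where "F l x = (if l = i then f x else h x)" for l x
  have "indep_vars (\<lambda>_. borel) (\<lambda>l \<omega>. F l (X l \<omega>)) {1..}"
    by (rule indep_vars_compose2[OF ind]) (case_tac "l = i", simp_all add: F_def f h)
  then have "indep_vars (\<lambda>_. borel) (\<lambda>l \<omega>. F l (X l \<omega>)) (insert i J)"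
    by (rule indep_vars_subset) (use J in auto)
  from indep_vars_sum[OF J(1,3) this]
  have "indep_var borel (\<lambda>\<omega>. F i (X i \<omega>)) borel (\<lambda>\<omega>. \<Sum>l\<in>J. F l (X l \<omega>))" .
  moreover have "(\<lambda>\<omega>. \<Sum>l\<in>J. F l (X l \<omega>)) = (\<lambda>\<omega>. \<Sum>l\<in>J. h (X l \<omega>))"
    using J(3) by (auto simp: F_def intro!: sum.cong)
  ultimately show ?thesis by (simp add: F_def)
qed

lemma indep_pair:
  assumes "1 \<le> i" "1 \<le> l" "i \<noteq> l"
    and f: "(f::real\<Rightarrow>real) \<in> borel_measurable borel" and h: "(h::real\<Rightarrow>real) \<in> borel_measurable borel"
  shows "indep_var borel (\<lambda>\<omega>. f (X i \<omega>)) borel (\<lambda>\<omega>. h (X l \<omega>))"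
  using indep_gen[of "{l}" i f h] assms by simp

lemma pk: "1 \<le> i \<Longrightarrow> 1 \<le> k \<Longrightarrow> prob {\<omega>\<in>space M. X i \<omega> = 2^k} = 1/2^k"
  using dist by simp

lemma int_bounded:
  assumes "f \<in> borel_measurable M" "\<And>\<omega>. \<omega> \<in> space M \<Longrightarrow> \<bar>f \<omega>\<bar> \<le> (C::real)"
  shows "integrable M f"
  using assms by (intro integrable_const_bound[where B=C]) auto

lemma int_ind: "1 \<le> i \<Longrightarrow> integrable M (\<lambda>\<omega>. if X i \<omega> = c then d else (0::real))"
  by (rule int_bounded[where C="\<bar>d\<bar>"]) auto

lemma E_ind: "1 \<le> i \<Longrightarrow> expectation (\<lambda>\<omega>. if X i \<omega> = c then d else (0::real)) = d * prob {\<omega>\<in>space M. X i \<omega> = c}"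
proof -
  assume i: "1 \<le> i"
  have "expectation (\<lambda>\<omega>. if X i \<omega> = c then d else (0::real)) = expectation (\<lambda>\<omega>. d * indicator {\<omega>\<in>space M. X i \<omega> = c} \<omega>)"
    by (intro Bochner_Integration.integral_cong) (auto simp: indicator_def)
  also have "\<dots> = d * prob {\<omega>\<in>space M. X i \<omega> = c}"
    using i by (subst integral_mult_right_zero) simp
  finally show ?thesis .
qed

lemma E_gk: assumes "1 \<le> i" "1 \<le> k" shows "expectation (\<lambda>\<omega>. gk k (X i \<omega>)) = real k - 1"
proof -
  have "expectation (\<lambda>\<omega>. gk k (X i \<omega>)) = (\<Sum>t\<in>{1..<k}. expectation (\<lambda>\<omega>. if X i \<omega> = 2^t then 2^t else 0))"
    unfolding gk_def using assms by (intro Bochner_Integration.integral_sum int_ind)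
  also have "\<dots> = (\<Sum>t\<in>{1..<k}. 1)"
    using assms by (intro sum.cong) (auto simp: E_ind pk)
  finally show ?thesis using assms by simp
qed

lemma four_pow: "(4::real)^t = 2^t*2^t"
  by (simp add: power_mult_distrib[symmetric])

lemma E_gk2: assumes "1 \<le> i" "1 \<le> k" shows "expectation (\<lambda>\<omega>. (gk k (X i \<omega>))^2) = 2^k - 2"
proof -
  obtain k' where k: "k = Suc k'" using assms by (cases k) auto
  have "expectation (\<lambda>\<omega>. (gk k (X i \<omega>))^2) = (\<Sum>t\<in>{1..<k}. expectation (\<lambda>\<omega>. if X i \<omega> = 2^t then 4^t else 0))"
    unfolding gk_sq using assms by (intro Bochner_Integration.integral_sum int_ind)
  also have "\<dots> = (\<Sum>t\<in>{1..<k}. 2^t)"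
    using assms by (intro sum.cong) (auto simp: E_ind pk four_pow)
  finally show ?thesis unfolding k sum_two .
qed

end


context stp begin

lemma P_less: assumes "1 \<le> l" "1 \<le> k"
  shows "prob {\<omega>\<in>space M. X l \<omega> < 2^k} \<ge> 1 - 2/2^k"
proof -
  obtain k' where k: "k = Suc k'" using assms by (cases k) auto
  have "prob (\<Union>t\<in>{1..<k}. {\<omega>\<in>space M. X l \<omega> = 2^t}) = (\<Sum>t\<in>{1..<k}. prob {\<omega>\<in>space M. X l \<omega> = 2^t})"
    using assms by (intro measure_finite_Union) (auto simp: disjoint_family_on_def)
  also have "\<dots> = (\<Sum>t\<in>{1..<k}. 1/2^t)" using assms by (intro sum.cong) (auto simp: pk)
  also have "\<dots> = 1 - 2/2^k" unfolding k sum_half by simp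
  finally have eq: "prob (\<Union>t\<in>{1..<k}. {\<omega>\<in>space M. X l \<omega> = 2^t}) = 1 - 2/2^k" .
  have "prob (\<Union>t\<in>{1..<k}. {\<omega>\<in>space M. X l \<omega> = 2^t}) \<le> prob {\<omega>\<in>space M. X l \<omega> < 2^k}"
    using assms by (intro finite_measure_mono) auto
  then show ?thesis using eq by simp
qed

lemma P_notpow: assumes "1 \<le> l"
  shows "prob {\<omega>\<in>space M. X l \<omega> \<notin> range (\<lambda>t::nat. (2::real)^Suc t)} = 0"
proof -
  let ?A = "\<lambda>t::nat. {\<omega>\<in>space M. X l \<omega> = 2^Suc t}"
  have s1: "(\<lambda>t. prob (?A t)) sums prob (\<Union>t. ?A t)"
    using assms by (intro finite_measure_UNION) (auto simp: disjoint_family_on_def)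
  have e: "(\<lambda>t. prob (?A t)) = (\<lambda>t. (1/2)^Suc t)"
    using assms by (auto simp: pk power_one_over simp del: power_Suc)
  have s2: "(\<lambda>t. prob (?A t)) sums 1" unfolding e by (rule power_half_series)
  have "prob (\<Union>t. ?A t) = 1" using sums_unique2[OF s1 s2] .
  then have 1: "prob (\<Union>t. ?A t) = 1" by simp
  have "{\<omega>\<in>space M. X l \<omega> \<notin> range (\<lambda>t::nat. (2::real)^Suc t)} = space M - (\<Union>t. ?A t)"
    by auto
  also have "prob \<dots> = 0"
  proof -
    have "(\<Union>t. ?A t) \<in> sets M" using assms by (intro sets.countable_UN) (auto simp del: power_Suc)
    then show ?thesis using 1 by (simp add: prob_compl)
  qed
  finally show ?thesis .
qed

end


context stp begin

lemma int_g: "1 \<le> l \<Longrightarrow> integrable M (\<lambda>\<omega>. gk k (X l \<omega>))"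
  by (rule int_bounded[where C="2^k"]) (auto simp: gk_bound)

lemma int_g2: "1 \<le> l \<Longrightarrow> integrable M (\<lambda>\<omega>. (gk k (X l \<omega>))^2)"
proof (rule int_bounded[where C="(2^k)^2"])
  fix \<omega> show "\<bar>(gk k (X l \<omega>))^2\<bar> \<le> (2^k)^2"
  proof -
    have "\<bar>gk k (X l \<omega>)\<bar> \<le> \<bar>2^k\<bar>" using gk_bound[of k "X l \<omega>"] by simp
    then show ?thesis unfolding abs_le_square_iff by simp
  qed
qed auto

lemma EZ: assumes "1 \<le> l" "1 \<le> k" shows "expectation (\<lambda>\<omega>. gk k (X l \<omega>) - (real k - 1)) = 0"
  using assms by (simp add: Bochner_Integration.integral_diff int_g E_gk prob_space)

lemma EZ2: assumes "1 \<le> l" "1 \<le> k" shows "expectation (\<lambda>\<omega>. (gk k (X l \<omega>) - (real k - 1))^2) \<le> 2^k"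
proof -
  let ?m = "real k - 1"
  have "expectation (\<lambda>\<omega>. (gk k (X l \<omega>) - ?m)^2) = expectation (\<lambda>\<omega>. (gk k (X l \<omega>))^2 - 2 * ?m * gk k (X l \<omega>) + ?m^2)"
    by (intro Bochner_Integration.integral_cong) (auto simp: power2_diff)
  also have "\<dots> = (2^k - 2) - 2 * ?m * ?m + ?m^2"
    using assms by (simp add: Bochner_Integration.integral_diff Bochner_Integration.integral_add int_g int_g2 E_gk E_gk2 prob_space)
  also have "\<dots> = 2^k - 2 - ?m^2" by (simp add: algebra_simps power2_eq_square)
  also have "\<dots> \<le> 2^k" using zero_le_power2[of ?m] by linarith
  finally show ?thesis .
qed

lemma Var_sum: assumes J: "finite J" "J \<subseteq> {1..}" and k: "1 \<le> k"
  shows "expectation (\<lambda>\<omega>. (\<Sum>l\<in>J. gk k (X l \<omega>) - (real k - 1))^2) \<le> card J * 2^k"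
proof -
  define Z where "Z l \<omega> = gk k (X l \<omega>) - (real k - 1)" for l \<omega>
  have intZ: "integrable M (\<lambda>\<omega>. Z a \<omega> * Z b \<omega>)" if "a \<in> J" "b \<in> J" for a b
  proof (rule int_bounded[where C="(2^k + \<bar>real k - 1\<bar>) * (2^k + \<bar>real k - 1\<bar>)"])
    show "(\<lambda>\<omega>. Z a \<omega> * Z b \<omega>) \<in> borel_measurable M" using rv[of a] rv[of b] that J
      by (auto intro!: borel_measurable_times borel_measurable_diff measurable_compose[OF _ gk_meas] simp: Z_def)
    fix \<omega> have "\<bar>Z c \<omega>\<bar> \<le> 2^k + \<bar>real k - 1\<bar>" for c
      unfolding Z_def using gk_bound[of k "X c \<omega>"] by linarith
    then show "\<bar>Z a \<omega> * Z b \<omega>\<bar> \<le> (2^k + \<bar>real k - 1\<bar>) * (2^k + \<bar>real k - 1\<bar>)"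
      unfolding abs_mult by (intro mult_mono) auto
  qed
  have cross: "expectation (\<lambda>\<omega>. Z a \<omega> * Z b \<omega>) = (if a = b then expectation (\<lambda>\<omega>. (Z a \<omega>)^2) else 0)"
    if "a \<in> J" "b \<in> J" for a b
  proof (cases "a = b")
    case True then show ?thesis by (simp add: power2_eq_square)
  next
    case False
    have a: "1 \<le> a" "1 \<le> b" using that J by auto
    have "indep_var borel (\<lambda>\<omega>. (\<lambda>x. gk k x - (real k - 1)) (X a \<omega>)) borel (\<lambda>\<omega>. (\<lambda>x. gk k x - (real k - 1)) (X b \<omega>))"
      by (rule indep_pair) (use a False in auto)
    then have "indep_var borel (Z a) borel (Z b)" by (simp add: Z_def[abs_def])
    then have "expectation (\<lambda>\<omega>. Z a \<omega> * Z b \<omega>) = expectation (Z a) * expectation (Z b)"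
      by (rule indep_var_lebesgue_integral) (use a in \<open>auto simp: Z_def[abs_def] int_g\<close>)
    also have "\<dots> = 0" using EZ[OF a(1) k] by (simp add: Z_def[abs_def])
    finally show ?thesis using False by simp
  qed
  have "expectation (\<lambda>\<omega>. (\<Sum>l\<in>J. Z l \<omega>)^2) = expectation (\<lambda>\<omega>. \<Sum>a\<in>J. \<Sum>b\<in>J. Z a \<omega> * Z b \<omega>)"
    by (simp add: power2_eq_square sum_product)
  also have "\<dots> = (\<Sum>a\<in>J. \<Sum>b\<in>J. expectation (\<lambda>\<omega>. Z a \<omega> * Z b \<omega>))"
    using intZ by (simp add: Bochner_Integration.integral_sum Bochner_Integration.integrable_sum)
  also have "\<dots> = (\<Sum>a\<in>J. \<Sum>b\<in>J. if a = b then expectation (\<lambda>\<omega>. (Z a \<omega>)^2) else 0)"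
    using cross by (intro sum.cong) auto
  also have "\<dots> = (\<Sum>a\<in>J. expectation (\<lambda>\<omega>. (Z a \<omega>)^2))"
    using J(1) by simp
  also have "\<dots> \<le> (\<Sum>a\<in>J. 2^k)"
    using J k by (intro sum_mono) (auto simp: Z_def intro!: EZ2)
  finally show ?thesis by (simp add: Z_def)
qed

end


context stp begin

lemma PE: assumes J: "finite J" "J \<subseteq> {1..}" "i \<notin> J" and i: "1 \<le> i" and k: "1 \<le> k" and d: "0 < \<delta>"
  shows "prob {\<omega>\<in>space M. X i \<omega> = 2^k \<and> \<delta> \<le> \<bar>\<Sum>l\<in>J. gk k (X l \<omega>) - (real k - 1)\<bar>}
     \<le> (1/2^k) * (card J * 2^k / \<delta>^2)"
proof -
  define W where "W \<omega> = (\<Sum>l\<in>J. gk k (X l \<omega>) - (real k - 1))" for \<omega>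
  have Wm[measurable]: "W \<in> borel_measurable M"
    unfolding W_def using J rv
    by (intro borel_measurable_sum borel_measurable_diff measurable_compose[OF _ gk_meas]) auto
  have iv: "indep_var borel (\<lambda>\<omega>. (\<lambda>x. x) (X i \<omega>)) borel (\<lambda>\<omega>. \<Sum>l\<in>J. (\<lambda>x. gk k x - (real k - 1)) (X l \<omega>))"
    by (rule indep_gen) (use J i in auto)
  then have iv': "indep_var borel (X i) borel W" by (simp add: W_def[abs_def])
  have "prob {\<omega>\<in>space M. X i \<omega> = 2^k \<and> \<delta> \<le> \<bar>W \<omega>\<bar>} = \<P>(\<omega> in M. X i \<omega> \<in> {2^k} \<and> W \<omega> \<in> {w. \<delta> \<le> \<bar>w\<bar>})"
    by simp
  also have "\<dots> = \<P>(\<omega> in M. X i \<omega> \<in> {2^k}) * \<P>(\<omega> in M. W \<omega> \<in> {w. \<delta> \<le> \<bar>w\<bar>})"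
    by (rule prob_indep_random_variable[OF iv']) auto
  also have "\<P>(\<omega> in M. X i \<omega> \<in> {2^k}) * \<P>(\<omega> in M. W \<omega> \<in> {w. \<delta> \<le> \<bar>w\<bar>}) \<le> (1/2^k) * (card J * 2^k / \<delta>^2)"
  proof -
    have intW2: "integrable M (\<lambda>x. W x ^ 2)"
    proof (rule int_bounded[where C="(\<Sum>l\<in>J. 2^k + \<bar>real k - 1\<bar>)^2"])
      fix \<omega>
      have "\<bar>W \<omega>\<bar> \<le> (\<Sum>l\<in>J. \<bar>gk k (X l \<omega>) - (real k - 1)\<bar>)" unfolding W_def by (rule sum_abs)
      also have "\<dots> \<le> (\<Sum>l\<in>J. 2^k + \<bar>real k - 1\<bar>)"
      proof (intro sum_mono)
        fix l show "\<bar>gk k (X l \<omega>) - (real k - 1)\<bar> \<le> 2^k + \<bar>real k - 1\<bar>"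
          using gk_bound[of k "X l \<omega>"] by linarith
      qed
      finally have "\<bar>W \<omega>\<bar> \<le> \<bar>\<Sum>l\<in>J. 2^k + \<bar>real k - 1\<bar>\<bar>" by simp
      then show "\<bar>W \<omega> ^ 2\<bar> \<le> (\<Sum>l\<in>J. 2^k + \<bar>real k - 1\<bar>)^2"
        unfolding abs_le_square_iff by simp
    qed auto
    have EW: "expectation W = 0"
    proof -
      have "expectation W = (\<Sum>l\<in>J. expectation (\<lambda>\<omega>. gk k (X l \<omega>) - (real k - 1)))"
        unfolding W_def using J
        by (intro Bochner_Integration.integral_sum Bochner_Integration.integrable_diff int_g) auto
      also have "\<dots> = 0" using J k by (intro sum.neutral) (auto intro!: EZ)
      finally show ?thesis .
    qed
    have "\<P>(\<omega> in M. W \<omega> \<in> {w. \<delta> \<le> \<bar>w\<bar>}) = prob {x\<in>space M. \<bar>W x - expectation W\<bar> \<ge> \<delta>}"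
      by (simp add: EW)
    also have "\<dots> \<le> variance W / \<delta>^2"
      by (rule Chebyshev_inequality) (use intW2 d in auto)
    also have "variance W = expectation (\<lambda>\<omega>. W \<omega>^2)" by (simp add: EW)
    also have "\<dots> \<le> card J * 2^k" unfolding W_def by (rule Var_sum[OF J(1,2) k])
    finally have "\<P>(\<omega> in M. W \<omega> \<in> {w. \<delta> \<le> \<bar>w\<bar>}) \<le> card J * 2^k / \<delta>^2"
      using d by (simp add: divide_right_mono)
    from divide_right_mono[OF this, of "2^k"] show ?thesis using pk[OF i k] by simp
  qed
  finally show ?thesis unfolding W_def .
qed

end


context stp begin

lemma PD: assumes n: "i \<in> {1..n}" and k: "1 \<le> k"
  shows "prob {\<omega>\<in>space M. X i \<omega> = 2^k \<and> (\<forall>l\<in>{1..n}-{i}. X l \<omega> < 2^k)} \<ge> (1/2^k) * (1 - 2/2^k)^(n-1)"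
proof -
  let ?N = "{1..n}"
  define A where "A l = (if l = i then {2^k} else {..<2^k::real})" for l
  have "prob (\<Inter>l\<in>?N. X l -` A l \<inter> space M) = (\<Prod>l\<in>?N. prob (X l -` A l \<inter> space M))"
    by (rule indep_varsD[OF ind]) (use n in \<open>auto simp: A_def\<close>)
  moreover have "(\<Inter>l\<in>?N. X l -` A l \<inter> space M) = {\<omega>\<in>space M. X i \<omega> = 2^k \<and> (\<forall>l\<in>{1..n}-{i}. X l \<omega> < 2^k)}"
    using n by (auto simp: A_def split: if_splits)
  moreover have "(\<Prod>l\<in>?N. prob (X l -` A l \<inter> space M)) = prob (X i -` A i \<inter> space M) * (\<Prod>l\<in>?N-{i}. prob (X l -` A l \<inter> space M))"
    using n by (intro prod.remove) auto
  moreover have "prob (X i -` A i \<inter> space M) = 1/2^k"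
    using pk[of i k] n k by (simp add: A_def vimage_def Int_def conj_commute)
  moreover have "(\<Prod>l\<in>?N-{i}. prob (X l -` A l \<inter> space M)) \<ge> (\<Prod>l\<in>?N-{i}. 1 - 2/2^k)"
  proof (intro prod_mono conjI)
    fix l assume l: "l \<in> ?N - {i}"
    have "prob (X l -` A l \<inter> space M) = prob {\<omega>\<in>space M. X l \<omega> < 2^k}"
      using l by (simp add: A_def vimage_def Int_def conj_commute)
    then show "1 - 2/2^k \<le> prob (X l -` A l \<inter> space M)" using P_less[of l k] l k by simp
    have "(2::real)/2^k \<le> 1" using k by (cases k) auto
    then show "0 \<le> 1 - (2::real)/2^k" by simp
  qed
  moreover have "(\<Prod>l\<in>?N-{i}. 1 - (2::real)/2^k) = (1 - 2/2^k)^(n-1)"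
    using n by (simp add: card_Diff_singleton)
  ultimately show ?thesis by (simp add: divide_right_mono)
qed

lemma PB: assumes n: "1 \<le> n" and k: "1 \<le> k" and sm: "2 * real (n-1) / 2^k \<le> 1/2"
  shows "prob {\<omega>\<in>space M. Xmax X n \<omega> = 2^k} \<ge> n / (2 * 2^k)"
proof -
  let ?N = "{1..n}"
  define D where "D i = {\<omega>\<in>space M. X i \<omega> = 2^k \<and> (\<forall>l\<in>{1..n}-{i}. X l \<omega> < 2^k)}" for i
  have sub: "(\<Union>i\<in>?N. D i) \<subseteq> {\<omega>\<in>space M. Xmax X n \<omega> = 2^k}"
  proof safe
    fix i \<omega> assume i: "i \<in> ?N" and w: "\<omega> \<in> D i"
    then show "\<omega> \<in> space M" by (simp add: D_def)
    show "Xmax X n \<omega> = 2^k" unfolding Xmax_def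
    proof (rule Max_eqI)
      show "finite ((\<lambda>i. X i \<omega>) ` ?N)" by simp
      fix y assume "y \<in> (\<lambda>i. X i \<omega>) ` ?N"
      then obtain l where "l \<in> ?N" "y = X l \<omega>" by auto
      then show "y \<le> 2^k" using w unfolding D_def
        by (cases "l = i") (simp, metis (no_types, lifting) Diff_iff \<open>l \<in> ?N\<close> empty_iff insert_iff less_eq_real_def mem_Collect_eq)
    next
      have "X i \<omega> = 2^k" using w by (simp add: D_def)
      then show "2^k \<in> (\<lambda>i. X i \<omega>) ` ?N" using i by (metis image_eqI)
    qed
  qed
  have "prob (\<Union>i\<in>?N. D i) = (\<Sum>i\<in>?N. prob (D i))"
  proof (rule measure_finite_Union)
    show "disjoint_family_on D ?N"
      unfolding disjoint_family_on_def D_def by force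
  qed (auto simp: D_def)
  also have "\<dots> \<ge> (\<Sum>i\<in>?N. (1/2^k) * (1 - 2/2^k)^(n-1))"
    unfolding D_def by (intro sum_mono PD k) auto
  finally have "(\<Sum>i\<in>?N. (1/2^k) * (1 - 2/2^k)^(n-1)) \<le> prob (\<Union>i\<in>?N. D i)" .
  moreover have "prob (\<Union>i\<in>?N. D i) \<le> prob {\<omega>\<in>space M. Xmax X n \<omega> = 2^k}"
    using sub by (intro finite_measure_mono) (auto simp: Xmax_def)
  moreover have "(1 - 2/2^k)^(n-1) \<ge> (1/2::real)"
  proof -
    have "(2::real)/2^k \<le> 1" using k by (cases k) auto
    then have b: "1 + real (n-1) * (- (2/2^k)) \<le> (1 + (- (2/2^k)))^(n-1)"
      by (intro Bernoulli_inequality) simp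
    have e1: "1 + real (n-1) * (- (2/2^k)) = 1 - 2 * real (n-1) / 2^k" by simp
    have e2: "(1 + (- (2/2^k)))^(n-1) = (1 - 2/2^k::real)^(n-1)" by simp
    show ?thesis using b sm unfolding e1 e2 by linarith
  qed
  moreover have "(\<Sum>i\<in>?N. (1/2^k) * (1 - 2/2^k)^(n-1)) = real n * ((1/2^k) * (1 - 2/2^k)^(n-1))"
    by simp
  ultimately have "real n * ((1/2^k) * (1/2)) \<le> prob {\<omega>\<in>space M. Xmax X n \<omega> = 2^k}"
    by (smt (verit) mult_left_mono of_nat_0_le_iff divide_nonneg_nonneg zero_le_power zero_le_one)
  then show ?thesis by simp
qed

end


context stp begin

lemma core:
  assumes n: "1 \<le> n" and k: "1 \<le> k" and e: "0 < \<epsilon>"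
    and cc: "\<bar>real (n-1) * (real k - 1) / 2^k - c\<bar> \<le> \<epsilon>/2"
    and sm: "2 * real (n-1) / 2^k \<le> 1/2"
  shows "cond_prob M (\<lambda>\<omega>. \<bar>Ssum X n \<omega> / Xmax X n \<omega> - c - 1\<bar> > \<epsilon>) (\<lambda>\<omega>. Xmax X n \<omega> = 2^k)
         \<le> 2 * (1 + 4/\<epsilon>^2) * n / 2^k"
proof -
  define m :: real where "m = 2^k"
  have m0: "0 < m" by (simp add: m_def)
  let ?N = "{1..n}"
  define \<mu> where "\<mu> = real k - 1"
  define \<delta> where "\<delta> = \<epsilon> * m / 2"
  have d0: "0 < \<delta>" using e m0 by (simp add: \<delta>_def)
  define W where "W i \<omega> = (\<Sum>l\<in>?N-{i}. gk k (X l \<omega>) - \<mu>)" for i \<omega>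
  define Aset where "Aset = {\<omega>\<in>space M. \<bar>Ssum X n \<omega> / Xmax X n \<omega> - c - 1\<bar> > \<epsilon> \<and> Xmax X n \<omega> = m}"
  define Pairs where "Pairs = (\<Union>i\<in>?N. \<Union>l\<in>?N-{i}. {\<omega>\<in>space M. X i \<omega> = m \<and> X l \<omega> = m})"
  define Es where "Es = (\<Union>i\<in>?N. {\<omega>\<in>space M. X i \<omega> = m \<and> \<delta> \<le> \<bar>W i \<omega>\<bar>})"
  define Nul where "Nul = (\<Union>l\<in>?N. {\<omega>\<in>space M. X l \<omega> \<notin> range (\<lambda>t::nat. (2::real)^Suc t)})"
  have incl: "Aset \<subseteq> Pairs \<union> Es \<union> Nul"
  proof
    fix \<omega> assume wA: "\<omega> \<in> Aset"
    show "\<omega> \<in> Pairs \<union> Es \<union> Nul"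
    proof (rule ccontr)
      assume "\<omega> \<notin> Pairs \<union> Es \<union> Nul"
      then have nP: "\<omega> \<notin> Pairs" and nE: "\<omega> \<notin> Es" and nN: "\<omega> \<notin> Nul" by auto
      have sp: "\<omega> \<in> space M" and mx: "Xmax X n \<omega> = m"
        and big: "\<bar>Ssum X n \<omega> / Xmax X n \<omega> - c - 1\<bar> > \<epsilon>" using wA by (auto simp: Aset_def)
      have fin: "finite ((\<lambda>i. X i \<omega>) ` ?N)" "(\<lambda>i. X i \<omega>) ` ?N \<noteq> {}" using n by auto
      have "m \<in> (\<lambda>i. X i \<omega>) ` ?N" using Max_in[OF fin] mx by (simp add: Xmax_def)
      then obtain i where i: "i \<in> ?N" "X i \<omega> = m" by auto
      have le: "X l \<omega> \<le> m" if "l \<in> ?N" for l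
        using Max_ge[OF fin(1)] that mx by (auto simp: Xmax_def)
      have gl: "gk k (X l \<omega>) = X l \<omega>" if l: "l \<in> ?N - {i}" for l
      proof -
        have "X l \<omega> \<noteq> m" using nP i l sp by (auto simp: Pairs_def)
        then have lt: "X l \<omega> < m" using le l by force
        have "X l \<omega> \<in> range (\<lambda>t::nat. (2::real)^Suc t)" using nN l sp by (auto simp: Nul_def)
        then obtain t where t: "X l \<omega> = 2^Suc t" by auto
        have h: "(2::real)^Suc t < 2^k" using lt by (simp only: t m_def)
        have "Suc t < k" using h power_strict_increasing_iff[of "2::real" "Suc t" k] by simp
        then show ?thesis unfolding t by (intro gk_pow) auto
      qed
      have cardN: "card (?N - {i}) = n - 1" using i by simp
      have "Ssum X n \<omega> = X i \<omega> + (\<Sum>l\<in>?N-{i}. X l \<omega>)"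
        unfolding Ssum_def using i by (simp add: sum.remove)
      also have "(\<Sum>l\<in>?N-{i}. X l \<omega>) = (\<Sum>l\<in>?N-{i}. gk k (X l \<omega>))"
        using gl by simp
      also have "\<dots> = W i \<omega> + real (n-1) * \<mu>"
        unfolding W_def sum_subtractf sum_constant cardN by simp
      finally have S: "Ssum X n \<omega> = m + W i \<omega> + real (n-1) * \<mu>" using i by simp
      have "Ssum X n \<omega> / Xmax X n \<omega> - c - 1 = W i \<omega> / m + (real (n-1) * \<mu> / m - c)"
        unfolding S mx using m0 by (simp add: field_simps)
      then have "\<epsilon> < \<bar>W i \<omega> / m\<bar> + \<epsilon>/2" using big cc unfolding \<mu>_def m_def by linarith
      moreover have "\<bar>W i \<omega> / m\<bar> = \<bar>W i \<omega>\<bar> / m" using m0 by (simp add: abs_div)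
      ultimately have "\<epsilon> / 2 < \<bar>W i \<omega>\<bar> / m" by linarith
      then have "\<delta> \<le> \<bar>W i \<omega>\<bar>" using m0 unfolding \<delta>_def by (simp add: field_simps)
      then have "\<omega> \<in> Es" using i sp by (auto simp: Es_def)
      then show False using nE by simp
    qed
  qed
  have mP: "Pairs \<in> sets M" unfolding Pairs_def by measurable
  have mE: "Es \<in> sets M" unfolding Es_def W_def by measurable
  have mN1: "{\<omega>\<in>space M. X l \<omega> \<notin> range (\<lambda>t::nat. (2::real)^Suc t)} \<in> sets M" if "1 \<le> l" for l
  proof -
    have "{\<omega>\<in>space M. X l \<omega> \<notin> range (\<lambda>t::nat. (2::real)^Suc t)} = space M - (\<Union>t. {\<omega>\<in>space M. X l \<omega> = 2^Suc t})"
      by auto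
    moreover have "(\<Union>t. {\<omega>\<in>space M. X l \<omega> = 2^Suc t}) \<in> sets M"
      using that by (intro sets.countable_UN) (auto simp del: power_Suc)
    ultimately show ?thesis by auto
  qed
  have mN: "Nul \<in> sets M" unfolding Nul_def using mN1 by (intro sets.finite_UN) auto
  have pP: "prob Pairs \<le> real n * real n / m^2"
  proof -
    have "prob Pairs \<le> (\<Sum>i\<in>?N. prob (\<Union>l\<in>?N-{i}. {\<omega>\<in>space M. X i \<omega> = m \<and> X l \<omega> = m}))"
      unfolding Pairs_def by (intro finite_measure_subadditive_finite) auto
    also have "\<dots> \<le> (\<Sum>i\<in>?N. \<Sum>l\<in>?N-{i}. prob {\<omega>\<in>space M. X i \<omega> = m \<and> X l \<omega> = m})"
      by (intro sum_mono finite_measure_subadditive_finite) auto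
    also have "\<dots> = (\<Sum>i\<in>?N. \<Sum>l\<in>?N-{i}. 1/m * (1/m))"
    proof (intro sum.cong refl)
      fix i l assume i: "i \<in> ?N" and l: "l \<in> ?N - {i}"
      have iv: "indep_var borel (\<lambda>\<omega>. (\<lambda>x. x) (X i \<omega>)) borel (\<lambda>\<omega>. (\<lambda>x. x) (X l \<omega>))"
        by (rule indep_pair) (use i l in auto)
      have "prob {\<omega>\<in>space M. X i \<omega> = m \<and> X l \<omega> = m} = \<P>(\<omega> in M. X i \<omega> \<in> {m} \<and> X l \<omega> \<in> {m})" by simp
      also have "\<dots> = \<P>(\<omega> in M. X i \<omega> \<in> {m}) * \<P>(\<omega> in M. X l \<omega> \<in> {m})"
        by (rule prob_indep_random_variable) (use iv in auto)
      also have "\<dots> = 1/m * (1/m)" using pk[of i k] pk[of l k] i l k by (simp add: m_def)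
      finally show "prob {\<omega>\<in>space M. X i \<omega> = m \<and> X l \<omega> = m} = 1/m * (1/m)" .
    qed
    also have "\<dots> \<le> (\<Sum>i\<in>?N. \<Sum>l\<in>?N. 1/m * (1/m))"
      by (intro sum_mono sum_mono2) auto
    also have "\<dots> = real n * real n / m^2" by (simp add: power2_eq_square)
    finally show ?thesis .
  qed
  have pE: "prob Es \<le> real n * real n * (4/\<epsilon>^2) / m^2"
  proof -
    have "prob Es \<le> (\<Sum>i\<in>?N. prob {\<omega>\<in>space M. X i \<omega> = m \<and> \<delta> \<le> \<bar>W i \<omega>\<bar>})"
      unfolding Es_def W_def by (intro finite_measure_subadditive_finite) auto
    also have "\<dots> \<le> (\<Sum>i\<in>?N. (1/2^k) * (card (?N-{i}) * 2^k / \<delta>^2))"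
      unfolding W_def m_def \<mu>_def by (intro sum_mono PE d0 k) auto
    also have "\<dots> \<le> (\<Sum>i\<in>?N. real n / \<delta>^2)"
    proof (intro sum_mono)
      fix i assume "i \<in> ?N"
      have "real (card (?N-{i})) \<le> n" by (metis card_Diff1_le card_atLeastAtMost diff_Suc_1 finite_atLeastAtMost of_nat_le_iff)
      then show "(1/2^k) * (card (?N-{i}) * 2^k / \<delta>^2) \<le> real n / \<delta>^2"
        by (simp add: divide_right_mono)
    qed
    also have "\<dots> = real n * real n * (4/\<epsilon>^2) / m^2"
      unfolding \<delta>_def using e m0 by (simp add: field_simps power2_eq_square)
    finally show ?thesis .
  qed
  have pN: "prob Nul = 0"
  proof -
    have "prob Nul \<le> (\<Sum>l\<in>?N. prob {\<omega>\<in>space M. X l \<omega> \<notin> range (\<lambda>t::nat. (2::real)^Suc t)})"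
      unfolding Nul_def
    proof (intro finite_measure_subadditive_finite)
      show "(\<lambda>l. {\<omega>\<in>space M. X l \<omega> \<notin> range (\<lambda>t::nat. (2::real)^Suc t)}) ` ?N \<subseteq> sets M"
        using mN1 by auto
    qed simp
    also have "\<dots> = 0" by (intro sum.neutral ballI P_notpow) auto
    finally show ?thesis by (simp add: measure_nonneg antisym)
  qed
  have pA: "prob Aset \<le> real n * real n * (1 + 4/\<epsilon>^2) / m^2"
  proof (cases "Aset \<in> sets M")
    case True
    have "prob Aset \<le> prob (Pairs \<union> Es \<union> Nul)"
      using incl mP mE mN by (intro finite_measure_mono) auto
    also have "\<dots> \<le> prob (Pairs \<union> Es) + prob Nul"
      using mP mE mN by (intro measure_Un_le) auto
    also have "\<dots> \<le> prob Pairs + prob Es + prob Nul"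
      using mP mE by (simp add: measure_Un_le)
    also have "\<dots> \<le> real n * real n * (1 + 4/\<epsilon>^2) / m^2"
    proof -
      have eq: "real n * real n * (1 + 4/\<epsilon>^2) / m^2 = real n * real n / m^2 + real n * real n * (4/\<epsilon>^2) / m^2"
        by (simp add: distrib_left add_divide_distrib)
      show ?thesis using pP pE pN eq by linarith
    qed
    finally show ?thesis .
  next
    case False then show ?thesis by (simp add: measure_notin_sets)
  qed
  have pB: "prob {\<omega>\<in>space M. Xmax X n \<omega> = m} \<ge> n / (2 * m)"
    unfolding m_def by (rule PB[OF n k sm])
  have nm: "0 < real n / (2*m)" using n m0 by simp
  have "cond_prob M (\<lambda>\<omega>. \<bar>Ssum X n \<omega> / Xmax X n \<omega> - c - 1\<bar> > \<epsilon>) (\<lambda>\<omega>. Xmax X n \<omega> = 2^k)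
     = prob Aset / prob {\<omega>\<in>space M. Xmax X n \<omega> = m}"
    by (simp add: cond_prob_def Aset_def m_def)
  also have "\<dots> \<le> (real n * real n * (1 + 4/\<epsilon>^2) / m^2) / (n / (2*m))"
    by (rule frac_le) (use pA pB nm in \<open>auto simp: measure_nonneg\<close>)
  also have "\<dots> = 2 * (1 + 4/\<epsilon>^2) * n / 2^k"
    using n m0 by (simp add: m_def field_simps power2_eq_square)
  finally show ?thesis .
qed

end



definition LL :: "nat \<Rightarrow> real" where "LL n = log 2 (real n) + log 2 (log 2 (real n))"

lemma LL_top: "filterlim LL at_top sequentially"
  unfolding LL_def by real_asymp

lemma ev_kseq: "eventually (\<lambda>n. 1 \<le> kseq j n) sequentially"
proof -
  have "eventually (\<lambda>n. LL n \<ge> 2 - real_of_int j) sequentially"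
    using LL_top by (simp add: filterlim_at_top)
  then show ?thesis
  proof (rule eventually_mono)
    fix n assume "LL n \<ge> 2 - real_of_int j"
    then have "real_of_int \<lfloor>LL n\<rfloor> \<ge> 1 - real_of_int j" by linarith
    then show "1 \<le> kseq j n" unfolding kseq_def LL_def[symmetric] by linarith
  qed
qed

lemma powr_LL: "2 \<le> n \<Longrightarrow> 2 powr LL n = real n * log 2 (real n)"
proof -
  assume n: "2 \<le> n"
  have l: "log 2 (real n) \<ge> 1" using n by simp
  show ?thesis unfolding LL_def using l n by (simp add: powr_add)
qed

lemma P_lower: "2 \<le> n \<Longrightarrow> 2 powr real_of_int (kseq j n) \<ge> 2 powr (real_of_int j - 1) * (real n * log 2 (real n))"
proof -
  assume n: "2 \<le> n"
  have "real_of_int (kseq j n) \<ge> LL n - 1 + real_of_int j"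
    unfolding kseq_def LL_def by linarith
  then have "2 powr real_of_int (kseq j n) \<ge> 2 powr (LL n + (real_of_int j - 1))" by simp
  also have "2 powr (LL n + (real_of_int j - 1)) = 2 powr (real_of_int j - 1) * (real n * log 2 (real n))"
    using n by (simp add: powr_add powr_LL)
  finally show ?thesis .
qed

lemma c_eq: "2 \<le> n \<Longrightarrow> 2 powr (- real_of_int j) * 2 powr frac (log 2 (real n) + log 2 (log 2 (real n)))
   = real n * log 2 (real n) / 2 powr real_of_int (kseq j n)"
proof -
  assume n: "2 \<le> n"
  have "2 powr (- real_of_int j) * 2 powr frac (LL n) = 2 powr (LL n - real_of_int (kseq j n))"
    unfolding kseq_def frac_def LL_def[symmetric] by (simp add: powr_add[symmetric] algebra_simps)
  also have "\<dots> = real n * log 2 (real n) / 2 powr real_of_int (kseq j n)"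
    using n by (simp add: powr_diff powr_LL)
  finally show ?thesis unfolding LL_def .
qed

lemma n_over_P: "(\<lambda>n. real n / 2 powr real_of_int (kseq j n)) \<longlonglongrightarrow> 0"
proof (rule Lim_null_comparison)
  have "(\<lambda>n::nat. 1 / log 2 (real n)) \<longlonglongrightarrow> 0" by real_asymp
  then show "(\<lambda>n. 2 powr (1 - real_of_int j) * (1 / log 2 (real n))) \<longlonglongrightarrow> 0"
    by (rule tendsto_mult_right_zero)
  show "eventually (\<lambda>n. norm (real n / 2 powr real_of_int (kseq j n)) \<le> 2 powr (1 - real_of_int j) * (1 / log 2 (real n))) sequentially"
    using eventually_ge_at_top[of 2]
  proof (rule eventually_mono)
    fix n :: nat assume n: "2 \<le> n"
    have l: "log 2 (real n) \<ge> 1" using n by simp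
    have pos: "0 < 2 powr (real_of_int j - 1) * (real n * log 2 (real n))" using n l by simp
    have "norm (real n / 2 powr real_of_int (kseq j n)) = real n / 2 powr real_of_int (kseq j n)" by simp
    also have "\<dots> \<le> real n / (2 powr (real_of_int j - 1) * (real n * log 2 (real n)))"
      by (intro divide_left_mono P_lower n pos) (simp_all add: pos)
    also have "\<dots> = 2 powr (1 - real_of_int j) * (1 / log 2 (real n))"
      using n l by (simp add: powr_diff field_simps)
    finally show "norm (real n / 2 powr real_of_int (kseq j n)) \<le> 2 powr (1 - real_of_int j) * (1 / log 2 (real n))" .
  qed
qed

lemma diff_lim: "(\<lambda>n. (real (n-1) * (real_of_int (kseq j n) - 1) - real n * log 2 (real n)) / 2 powr real_of_int (kseq j n)) \<longlonglongrightarrow> 0"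
proof (rule Lim_null_comparison)
  define C where "C = \<bar>real_of_int j\<bar> + 2"
  have "(\<lambda>n::nat. (real n * (log 2 (log 2 (real n)) + C) + (log 2 (real n) + log 2 (log 2 (real n)) + C)) / (real n * log 2 (real n))) \<longlonglongrightarrow> 0"
    by real_asymp
  then show "(\<lambda>n. 2 powr (1 - real_of_int j) * ((real n * (log 2 (log 2 (real n)) + C) + (log 2 (real n) + log 2 (log 2 (real n)) + C)) / (real n * log 2 (real n)))) \<longlonglongrightarrow> 0"
    by (rule tendsto_mult_right_zero)
  show "eventually (\<lambda>n. norm ((real (n-1) * (real_of_int (kseq j n) - 1) - real n * log 2 (real n)) / 2 powr real_of_int (kseq j n)) \<le> 2 powr (1 - real_of_int j) * ((real n * (log 2 (log 2 (real n)) + C) + (log 2 (real n) + log 2 (log 2 (real n)) + C)) / (real n * log 2 (real n)))) sequentially"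
    using eventually_ge_at_top[of 2]
  proof (rule eventually_mono)
    fix n :: nat assume n: "2 \<le> n"
    have l: "log 2 (real n) \<ge> 1" using n by simp
    have ll: "log 2 (log 2 (real n)) \<ge> 0" using l by simp
    define K where "K = real_of_int (kseq j n)"
    have fl: "LL n - 1 < real_of_int \<lfloor>LL n\<rfloor>" "real_of_int \<lfloor>LL n\<rfloor> \<le> LL n" by linarith+
    have Kd: "K = real_of_int \<lfloor>LL n\<rfloor> + real_of_int j" unfolding K_def kseq_def LL_def by simp
    have a: "\<bar>K - 1 - log 2 (real n)\<bar> \<le> log 2 (log 2 (real n)) + C"
      using fl ll unfolding Kd C_def LL_def by linarith
    have b: "\<bar>K - 1\<bar> \<le> log 2 (real n) + log 2 (log 2 (real n)) + C"
      using fl ll l unfolding Kd C_def LL_def by linarith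
    have eqn: "real (n-1) * (K - 1) - real n * log 2 (real n) = real n * (K - 1 - log 2 (real n)) - (K - 1)"
      using n by (simp add: of_nat_diff algebra_simps)
    have "\<bar>real n * (K - 1 - log 2 (real n)) - (K - 1)\<bar> \<le> real n * \<bar>K - 1 - log 2 (real n)\<bar> + \<bar>K - 1\<bar>"
      by (metis abs_mult abs_of_nat abs_triangle_ineq4)
    also have "\<dots> \<le> real n * (log 2 (log 2 (real n)) + C) + (log 2 (real n) + log 2 (log 2 (real n)) + C)"
      using a b by (intro add_mono mult_left_mono) auto
    finally have num: "\<bar>real (n-1) * (K - 1) - real n * log 2 (real n)\<bar> \<le> real n * (log 2 (log 2 (real n)) + C) + (log 2 (real n) + log 2 (log 2 (real n)) + C)"
      unfolding eqn .
    have pos: "0 < 2 powr (real_of_int j - 1) * (real n * log 2 (real n))" using n l by simp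
    have "norm ((real (n-1) * (K - 1) - real n * log 2 (real n)) / 2 powr K)
        = \<bar>real (n-1) * (K - 1) - real n * log 2 (real n)\<bar> / 2 powr K" by simp
    also have "\<dots> \<le> (real n * (log 2 (log 2 (real n)) + C) + (log 2 (real n) + log 2 (log 2 (real n)) + C)) / 2 powr K"
      by (intro divide_right_mono num) simp
    also have "\<dots> \<le> (real n * (log 2 (log 2 (real n)) + C) + (log 2 (real n) + log 2 (log 2 (real n)) + C)) / (2 powr (real_of_int j - 1) * (real n * log 2 (real n)))"
      unfolding K_def by (intro divide_left_mono P_lower n pos) (use ll l in \<open>simp_all add: pos C_def\<close>)
    also have "\<dots> = 2 powr (1 - real_of_int j) * ((real n * (log 2 (log 2 (real n)) + C) + (log 2 (real n) + log 2 (log 2 (real n)) + C)) / (real n * log 2 (real n)))"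
      using n l by (simp add: powr_diff field_simps)
    finally show "norm ((real (n-1) * (real_of_int (kseq j n) - 1) - real n * log 2 (real n)) / 2 powr real_of_int (kseq j n)) \<le> 2 powr (1 - real_of_int j) * ((real n * (log 2 (log 2 (real n)) + C) + (log 2 (real n) + log 2 (log 2 (real n)) + C)) / (real n * log 2 (real n)))"
      unfolding K_def .
  qed
qed




theorem mainTheorem7:
  fixes M :: "'a measure" and X :: "nat \<Rightarrow> 'a \<Rightarrow> real" and j :: int
  assumes "prob_space M"
    and "prob_space.indep_vars M (\<lambda>_. borel) X {1..}"
    and "\<And>i k. i \<ge> 1 \<Longrightarrow> k \<ge> 1 \<Longrightarrow>
           measure M {\<omega> \<in> space M. X i \<omega> = 2 ^ k} = 1 / 2 ^ k"
    and "\<epsilon> > 0"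
  shows "(\<lambda>n. cond_prob M
            (\<lambda>\<omega>. \<bar>Ssum X n \<omega> / Xmax X n \<omega>
                   - 2 powr (- real_of_int j)
                     * 2 powr frac (log 2 (real n) + log 2 (log 2 (real n))) - 1\<bar> > \<epsilon>)
            (\<lambda>\<omega>. Xmax X n \<omega> = 2 powr real_of_int (kseq j n)))
         \<longlonglongrightarrow> 0"
proof -
  have "stp M X" unfolding stp_def stp_axioms_def using assms by auto
  then interpret S: stp M X .
  have e: "0 < \<epsilon>" by fact
  define P where "P n = 2 powr real_of_int (kseq j n)" for n
  define c where "c n = 2 powr (- real_of_int j) * 2 powr frac (log 2 (real n) + log 2 (log 2 (real n)))" for n
  have nP: "(\<lambda>n. real n / P n) \<longlonglongrightarrow> 0" unfolding P_def by (rule n_over_P)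
  have ev1: "eventually (\<lambda>n. real n / P n < 1/4) sequentially"
    by (rule order_tendstoD(2)[OF nP]) simp
  have ev2: "eventually (\<lambda>n. \<bar>(real (n-1) * (real_of_int (kseq j n) - 1) - real n * log 2 (real n)) / P n\<bar> < \<epsilon>/2) sequentially"
  proof -
    have "((\<lambda>n. (real (n-1) * (real_of_int (kseq j n) - 1) - real n * log 2 (real n)) / P n) \<longlongrightarrow> 0) sequentially"
      using diff_lim[of j] unfolding P_def .
    from tendsto_iff[THEN iffD1, OF this, rule_format, of "\<epsilon>/2"] e
    have "eventually (\<lambda>n. dist ((real (n-1) * (real_of_int (kseq j n) - 1) - real n * log 2 (real n)) / P n) 0 < \<epsilon>/2) sequentially"
      by linarith
    then show ?thesis by (simp only: dist_real_def diff_zero)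
  qed
  show ?thesis
  proof (rule Lim_null_comparison)
    show "(\<lambda>n. 2 * (1 + 4/\<epsilon>^2) * (real n / P n)) \<longlonglongrightarrow> 0"
      by (rule tendsto_mult_right_zero[OF nP])
    show "eventually (\<lambda>n. norm (cond_prob M
            (\<lambda>\<omega>. \<bar>Ssum X n \<omega> / Xmax X n \<omega>
                   - 2 powr (- real_of_int j)
                     * 2 powr frac (log 2 (real n) + log 2 (log 2 (real n))) - 1\<bar> > \<epsilon>)
            (\<lambda>\<omega>. Xmax X n \<omega> = 2 powr real_of_int (kseq j n))) \<le> 2 * (1 + 4/\<epsilon>^2) * (real n / P n)) sequentially"
      using eventually_conj[OF eventually_conj[OF eventually_ge_at_top[of 2] ev_kseq[of j]] eventually_conj[OF ev1 ev2]]
    proof (rule eventually_mono, elim conjE)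
      fix n :: nat assume n: "2 \<le> n" and K: "1 \<le> kseq j n" and s1: "real n / P n < 1/4"
        and s2: "\<bar>(real (n-1) * (real_of_int (kseq j n) - 1) - real n * log 2 (real n)) / P n\<bar> < \<epsilon>/2"
      define k where "k = nat (kseq j n)"
      have kK: "real k = real_of_int (kseq j n)" using K by (simp add: k_def)
      have Pk: "P n = 2^k" unfolding P_def kK[symmetric] by (simp add: powr_realpow)
      have k1: "1 \<le> k" using K by (simp add: k_def)
      have P0: "0 < P n" by (simp add: P_def)
      have cn: "c n = real n * log 2 (real n) / P n" unfolding c_def P_def using n by (rule c_eq)
      have cc: "\<bar>real (n-1) * (real k - 1) / 2^k - c n\<bar> \<le> \<epsilon>/2"
      proof -
        have "real (n-1) * (real k - 1) / 2^k - c n = (real (n-1) * (real_of_int (kseq j n) - 1) - real n * log 2 (real n)) / P n"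
          unfolding cn Pk[symmetric] kK by (simp add: diff_divide_distrib)
        then show ?thesis using s2 by simp
      qed
      have sm: "2 * real (n-1) / 2^k \<le> 1/2"
      proof -
        have "2 * real (n-1) / P n \<le> 2 * real n / P n" using P0 by (intro divide_right_mono) auto
        then show ?thesis using s1 unfolding Pk by simp
      qed
      have core: "cond_prob M (\<lambda>\<omega>. \<bar>Ssum X n \<omega> / Xmax X n \<omega> - c n - 1\<bar> > \<epsilon>) (\<lambda>\<omega>. Xmax X n \<omega> = 2^k)
         \<le> 2 * (1 + 4/\<epsilon>^2) * n / 2^k"
        by (rule S.core) (use n k1 e cc sm in auto)
      have nn: "0 \<le> cond_prob M (\<lambda>\<omega>. \<bar>Ssum X n \<omega> / Xmax X n \<omega> - c n - 1\<bar> > \<epsilon>) (\<lambda>\<omega>. Xmax X n \<omega> = 2^k)"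
        by (simp add: cond_prob_def)
      show "norm (cond_prob M
            (\<lambda>\<omega>. \<bar>Ssum X n \<omega> / Xmax X n \<omega>
                   - 2 powr (- real_of_int j)
                     * 2 powr frac (log 2 (real n) + log 2 (log 2 (real n))) - 1\<bar> > \<epsilon>)
            (\<lambda>\<omega>. Xmax X n \<omega> = 2 powr real_of_int (kseq j n))) \<le> 2 * (1 + 4/\<epsilon>^2) * (real n / P n)"
        using core nn unfolding c_def P_def[symmetric] Pk by simp
    qed
  qed
qed



end
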